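(* Let $(X,d)$ be a complete metric space and $I:X\to(-\infty,0]$ a function of Baire class 1. Let $X_0$ be a nonempty dense subset of $X$ with the following property: for every $\beta<0$ there exists $\alpha(\beta)>0$ such that for every $x\in X_0$ with $I(x)<\beta$ there exists a sequence $\{x_n\}\subseteq X_0$ with $x_n\to x$ in $(X,d)$ and $\liminf_{n\to\infty}I(x_n)\ge I(x)+\alpha(\beta)$. Then there exists a residual set $S\subseteq X$ such that $I(x)=0$ for all $x\in S$.
   Context: A function is of Baire class 1 if it is a pointwise limit of a sequence of continuous functions. A set is residual if its complement is of first category (a countable union of nowhere dense sets). *)

theory Defs
  imports "HOL-Analysis.Analysis"
begin

definition baire_class_1 :: "('a::topological_space \<Rightarrow> real) \<Rightarrow> bool" where
  "baire_class_1 f \<longleftrightarrow>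
     (\<exists>g :: nat \<Rightarrow> 'a \<Rightarrow> real. (\<forall>n. continuous_on UNIV (g n)) \<and>
        (\<forall>x. (\<lambda>n. g n x) \<longlonglongrightarrow> f x))"

definition nowhere_dense :: "'a::topological_space set \<Rightarrow> bool" where
  "nowhere_dense A \<longleftrightarrow> interior (closure A) = {}"

definition first_category :: "'a::topological_space set \<Rightarrow> bool" where
  "first_category A \<longleftrightarrow> (\<exists>F :: nat \<Rightarrow> 'a set. (\<forall>n. nowhere_dense (F n)) \<and> A = (\<Union>n. F n))"

definition residual :: "'a::topological_space set \<Rightarrow> bool" where
  "residual S \<longleftrightarrow> first_category (UNIV - S)"

end

theory Submission
  imports Defs
begin

lemma nd_closed_diff_interior:
  assumes "closed F"
  shows "nowhere_dense (F - interior F)"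
  unfolding nowhere_dense_def
proof (rule ccontr)
  assume "interior (closure (F - interior F)) \<noteq> {}"
  then obtain z where z: "z \<in> interior (closure (F - interior F))" by blast
  let ?W = "interior (closure (F - interior F))"
  have "closure (F - interior F) \<subseteq> F"
    using assms by (simp add: closure_minimal)
  hence "?W \<subseteq> F" using interior_subset by blast
  hence WI: "?W \<subseteq> interior F" by (simp add: interior_maximal)
  have "z \<in> closure (F - interior F)" using z interior_subset by blast
  moreover have "open ?W" by simp
  ultimately have "?W \<inter> (F - interior F) \<noteq> {}"
    using z by (meson open_Int_closure_eq_empty disjoint_iff)
  thus False using WI by blast
qed

theorem lemma4p2:
  fixes I :: "'a::complete_space \<Rightarrow> real"
    and X0 :: "'a set"
  assumes nonpos: "\<And>x. I x \<le> 0"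
    and baire: "baire_class_1 I"
    and ne: "X0 \<noteq> {}"
    and dense: "closure X0 = UNIV"
    and approx: "\<forall>\<beta><0. \<exists>\<alpha>>0. \<forall>x\<in>X0. I x < \<beta> \<longrightarrow>
                 (\<exists>xs :: nat \<Rightarrow> 'a. (\<forall>n. xs n \<in> X0) \<and> xs \<longlonglongrightarrow> x \<and>
                    liminf (\<lambda>n. ereal (I (xs n))) \<ge> ereal (I x + \<alpha>))"
  shows "\<exists>S. residual S \<and> (\<forall>x\<in>S. I x = 0)"
proof -
  obtain g :: "nat \<Rightarrow> 'a \<Rightarrow> real" where gc: "\<And>n. continuous_on UNIV (g n)"
    and gl: "\<And>x. (\<lambda>n. g n x) \<longlonglongrightarrow> I x"
    using baire unfolding baire_class_1_def by blast
  define F where "F k N = {x. \<forall>m\<ge>N. \<forall>n\<ge>N. \<bar>g m x - g n x\<bar> \<le> inverse (real (Suc k))}" for k N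
  define A where "A p = (case prod_decode p of (k,N) \<Rightarrow> F k N - interior (F k N))" for p
  define S where "S = UNIV - (\<Union>p. A p)"
  have Fc: "closed (F k N)" for k N
  proof -
    have "F k N = (\<Inter>m\<in>{N..}. \<Inter>n\<in>{N..}. {x. \<bar>g m x - g n x\<bar> \<le> inverse (real (Suc k))})"
      unfolding F_def by auto
    moreover have "closed {x. \<bar>g m x - g n x\<bar> \<le> inverse (real (Suc k))}" for m n
      by (intro closed_Collect_le continuous_intros continuous_on_subset[OF gc]) auto
    ultimately show ?thesis by (simp add: closed_INT)
  qed
  have "residual S"
    unfolding residual_def first_category_def
  proof (intro exI conjI allI)
    show "nowhere_dense (A p)" for p
      unfolding A_def by (cases "prod_decode p") (simp add: nd_closed_diff_interior Fc)
    show "UNIV - S = (\<Union>p. A p)" unfolding S_def by blast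
  qed
  moreover have "I x = 0" if xS: "x \<in> S" for x
  proof (rule ccontr)
    assume "I x \<noteq> 0"
    hence neg: "I x < 0" using nonpos[of x] by linarith
    obtain \<alpha> where a0: "\<alpha> > 0" and aP: "\<forall>y\<in>X0. I y < I x / 2 \<longrightarrow>
                 (\<exists>xs :: nat \<Rightarrow> 'a. (\<forall>n. xs n \<in> X0) \<and> xs \<longlonglongrightarrow> y \<and>
                    liminf (\<lambda>n. ereal (I (xs n))) \<ge> ereal (I y + \<alpha>))"
      using approx[rule_format, of "I x / 2"] neg by fastforce
    have "min \<alpha> (- I x / 2) / 8 > 0" using a0 neg by simp
    then obtain k where kd: "inverse (real (Suc k)) < min \<alpha> (- I x / 2) / 8"
      using reals_Archimedean by blast
    define d where "d = inverse (real (Suc k))"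
    have d0: "d > 0" unfolding d_def by simp
    have "Cauchy (\<lambda>n. g n x)" using gl LIMSEQ_imp_Cauchy by blast
    then obtain N where N: "\<forall>m\<ge>N. \<forall>n\<ge>N. dist (g m x) (g n x) < d"
      using d0 unfolding Cauchy_def by blast
    have xF: "x \<in> F k N" using N unfolding F_def d_def dist_real_def
      by (auto intro: less_imp_le)
    have "x \<notin> A (prod_encode (k,N))" using xS unfolding S_def by blast
    hence "x \<in> interior (F k N)" using xF unfolding A_def by simp
    then obtain U where U: "open U" "x \<in> U" "U \<subseteq> F k N" by (meson interiorE)
    have IU: "\<bar>I y - g N y\<bar> \<le> d" if "y \<in> U" for y
    proof -
      have "(\<lambda>m. \<bar>g m y - g N y\<bar>) \<longlonglongrightarrow> \<bar>I y - g N y\<bar>"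
        by (intro tendsto_intros gl)
      moreover have "\<forall>m\<ge>N. \<bar>g m y - g N y\<bar> \<le> d"
        using that U(3) unfolding F_def d_def by auto
      ultimately show ?thesis by (intro LIMSEQ_le_const2) auto
    qed
    have "isCont (g N) x" using gc continuous_on_eq_continuous_at by blast
    then obtain \<delta> where \<delta>: "\<delta> > 0" "\<forall>y. dist y x < \<delta> \<longrightarrow> dist (g N y) (g N x) < d"
      using d0 unfolding continuous_at_eps_delta by blast
    obtain r0 where r0: "r0 > 0" "ball x r0 \<subseteq> U" using U open_contains_ball by blast
    define r where "r = min r0 \<delta>"
    have r: "r > 0" using r0 \<delta> unfolding r_def by simp
    have close: "\<bar>I y - I x\<bar> \<le> 3 * d" if "dist y x < r" for y
    proof -
      have "y \<in> U" using that r0 unfolding r_def by (auto simp: dist_commute)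
      moreover have "\<bar>g N y - g N x\<bar> < d" using \<delta> that unfolding r_def dist_real_def by auto
      ultimately show ?thesis using IU[of y] IU[of x] U(2) by linarith
    qed
    have "x \<in> closure X0" using dense by simp
    then obtain y where y: "y \<in> X0" "dist y x < r" using r closure_approachable by blast
    have Iy: "\<bar>I y - I x\<bar> \<le> 3 * d" using close y by blast
    have "I y < I x / 2" using Iy kd unfolding d_def by linarith
    then obtain ys where ys: "\<forall>n. ys n \<in> X0" "ys \<longlonglongrightarrow> y"
      "liminf (\<lambda>n. ereal (I (ys n))) \<ge> ereal (I y + \<alpha>)"
      using aP y by blast
    have "y \<in> ball x r" using y by (simp add: dist_commute)
    hence "eventually (\<lambda>n. ys n \<in> ball x r) sequentially"
      using ys(2) by (intro topological_tendstoD) auto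
    hence ev: "eventually (\<lambda>n. ereal (I (ys n)) \<le> ereal (I x + 3 * d)) sequentially"
      proof eventually_elim
      case (elim n)
      hence "dist (ys n) x < r" by (simp add: dist_commute)
      thus ?case using close[of "ys n"] by simp
    qed
    have "liminf (\<lambda>n. ereal (I (ys n))) \<le> liminf (\<lambda>n. ereal (I x + 3 * d))"
      by (rule Liminf_mono[OF ev])
    also have "\<dots> = ereal (I x + 3 * d)" by (simp add: Liminf_const)
    finally have "ereal (I y + \<alpha>) \<le> ereal (I x + 3 * d)" using ys(3) by (rule order.trans[rotated])
    hence "I y + \<alpha> \<le> I x + 3 * d" by simp
    thus False using Iy kd unfolding d_def by linarith
  qed
  ultimately show ?thesis by blast
qed

end
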